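(* Let $\sigma=(\sigma_n)_{n\in\mathbb{N}}$ be an increasing sequence of positive integers, let $\gamma$ be a positive integer, and define $\tau_n=\sigma_{\gamma n}$. Then a nonnegative random variable $W$ is $\sigma$-summable if and only if it is $\tau$-summable.
   Context: Let $W$ be a nonnegative random variable and $\sigma=(\sigma_n)_{n\in\mathbb{N}}$ a sequence of positive integers (or reals $\ge 1$). Let $(W_n^j)_{n,j\in\mathbb{N}}$ be independent copies of $W$ and $\Lambda_n=\min_{1\le j\le\sigma_n}W_n^j$. $W$ is called $\sigma$-summable if $\Pr\{\sum_n\Lambda_n<\infty\}>0$. *)

theory Defs
  imports "HOL-Probability.Probability"
begin

text \<open>The law of W is a probability measure mu on the reals. Independent copies
  (W_n^j) of W are realised canonically as the coordinates of the infinite product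
  measure of mu over the index set nat x nat.\<close>

definition iid_copies :: "real measure \<Rightarrow> (nat \<times> nat \<Rightarrow> real) measure" where
  "iid_copies mu = PiM UNIV (\<lambda>_. mu)"

definition Lambda :: "(nat \<Rightarrow> nat) \<Rightarrow> (nat \<times> nat \<Rightarrow> real) \<Rightarrow> nat \<Rightarrow> real" where
  "Lambda \<sigma> \<omega> n = Min ((\<lambda>j. \<omega> (n, j)) ` {1..\<sigma> n})"

definition summable_wrt :: "real measure \<Rightarrow> (nat \<Rightarrow> nat) \<Rightarrow> bool" where
  "summable_wrt mu \<sigma> \<longleftrightarrow>
     measure (iid_copies mu) {\<omega> \<in> space (iid_copies mu).
        (\<Sum>n. ennreal (Lambda \<sigma> \<omega> n)) < \<infinity>} > 0"

end

theory Submission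
  imports Defs
begin

lemma group_le:
  fixes g :: "nat \<Rightarrow> ennreal" and c :: nat
  assumes "c \<ge> 1"
  shows "(\<Sum>n. g n) \<le> (\<Sum>k<c. \<Sum>m. g (c*m+k))"
proof (rule suminf_le_const[OF summableI])
  fix N
  have sub: "{..<N} \<subseteq> (\<lambda>(k,m). c*m+k) ` ({..<c}\<times>{..<N})"
  proof
    fix n assume "n \<in> {..<N}"
    have "n = c*(n div c) + n mod c" by simp
    moreover have "n mod c < c" using assms by simp
    moreover have "n div c < N" using \<open>n \<in> {..<N}\<close> assms
      by (metis div_le_dividend le_less_trans lessThan_iff)
    ultimately show "n \<in> (\<lambda>(k,m). c*m+k) ` ({..<c}\<times>{..<N})" by force
  qed
  have inj: "inj_on (\<lambda>(k,m). c*m+k) ({..<c}\<times>{..<N})"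
  proof (rule inj_onI, clarsimp)
    fix k m k' m' assume "k < c" "k' < c" "c*m+k = c*m'+k'"
    then have "(c*m+k) mod c = (c*m'+k') mod c" "(c*m+k) div c = (c*m'+k') div c" by simp_all
    with \<open>k<c\<close> \<open>k'<c\<close> show "k = k' \<and> m = m'" by simp
  qed
  have "sum g {..<N} \<le> sum g ((\<lambda>(k,m). c*m+k) ` ({..<c}\<times>{..<N}))"
    by (rule sum_mono2[OF _ sub]) auto
  also have "\<dots> = (\<Sum>(k,m)\<in>{..<c}\<times>{..<N}. g (c*m+k))"
    by (subst sum.reindex[OF inj]) (simp add: case_prod_beta)
  also have "\<dots> = (\<Sum>k<c. \<Sum>m<N. g (c*m+k))"
    by (simp add: sum.cartesian_product)
  also have "\<dots> \<le> (\<Sum>k<c. \<Sum>m. g (c*m+k))"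
    by (intro sum_mono sum_le_suminf) auto
  finally show "sum g {..<N} \<le> (\<Sum>k<c. \<Sum>m. g (c*m+k))" .
qed

lemma sub_le:
  fixes g :: "nat \<Rightarrow> ennreal" and c :: nat
  assumes "c \<ge> 1"
  shows "(\<Sum>m. g (c*m)) \<le> (\<Sum>n. g n)"
proof (rule suminf_le_const[OF summableI])
  fix N
  have inj: "inj_on (\<lambda>m. c*m) {..<N}" using assms by (auto intro: inj_onI)
  have "sum (\<lambda>m. g (c*m)) {..<N} = sum g ((\<lambda>m. c*m) ` {..<N})"
    by (simp add: sum.reindex[OF inj])
  also have "\<dots> \<le> (\<Sum>n. g n)" by (intro sum_le_suminf) auto
  finally show "sum (\<lambda>m. g (c*m)) {..<N} \<le> (\<Sum>n. g n)" .
qed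

lemma Lambda_meas:
  assumes "sets mu = sets borel"
  shows "(\<lambda>\<omega>. Lambda \<sigma> \<omega> n) \<in> borel_measurable (iid_copies mu)"
  unfolding Lambda_def iid_copies_def
  apply (intro borel_measurable_Min, simp)
  apply (subst measurable_cong_sets[OF refl assms, symmetric])
  apply (rule measurable_component_singleton)
  apply simp
  done

lemma E_meas:
  assumes "sets mu = sets borel"
  shows "{\<omega> \<in> space (iid_copies mu). (\<Sum>n. ennreal (Lambda \<sigma> \<omega> n)) < \<infinity>} \<in> sets (iid_copies mu)"
  using Lambda_meas[OF assms] by measurable

lemma T_meas:
  "(\<lambda>\<omega>. \<omega> \<circ> f) \<in> measurable (iid_copies mu) (iid_copies mu)"
  unfolding iid_copies_def comp_def
  apply (rule measurable_PiM_single')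
   apply (rule measurable_component_singleton)
   apply simp
  apply (auto simp: space_PiM)
  done

lemma T_distr:
  assumes "prob_space mu" "inj f"
  shows "distr (iid_copies mu) (iid_copies mu) (\<lambda>\<omega>. \<omega> \<circ> f) = iid_copies mu"
  using distr_PiM_reindex[where K=UNIV and M="\<lambda>_. mu" and f=f and I=UNIV] assms
  unfolding iid_copies_def by (simp add: restrict_UNIV comp_def)

lemma T_prob:
  assumes "prob_space mu" "inj f" "A \<in> sets (iid_copies mu)"
  shows "measure (iid_copies mu) ((\<lambda>\<omega>. \<omega> \<circ> f) -` A \<inter> space (iid_copies mu)) = measure (iid_copies mu) A"
  using measure_distr[OF T_meas[where mu=mu and f=f], of A] T_distr[OF assms(1,2)] assms(3) by simp

lemma coord_indep:
  assumes "prob_space mu"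
  shows "prob_space.indep_vars (iid_copies mu) (\<lambda>_. mu) (\<lambda>i \<omega>. \<omega> i) UNIV"
proof -
  interpret P: prob_space "iid_copies mu"
    unfolding iid_copies_def using assms by (intro prob_space_PiM) auto
  show ?thesis
  proof (rule P.indep_vars_iff_distr_eq_PiM[THEN iffD2])
    show "UNIV \<noteq> {}" by simp
    fix i show "(\<lambda>\<omega>. \<omega> i) \<in> measurable (iid_copies mu) mu"
      unfolding iid_copies_def by (rule measurable_component_singleton) simp
  next
    have "distr (iid_copies mu) mu (\<lambda>x. x i) = mu" for i
      unfolding iid_copies_def using assms by (intro distr_PiM_component) auto
    then show "distr (iid_copies mu) (Pi\<^sub>M UNIV (\<lambda>_. mu)) (\<lambda>x. \<lambda>i\<in>UNIV. x i) =
      Pi\<^sub>M UNIV (\<lambda>i. distr (iid_copies mu) mu (\<lambda>x. x i))"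
      by (simp add: restrict_UNIV iid_copies_def)
  qed
qed

lemma block_indep:
  assumes "prob_space mu"
    and disj: "\<And>k k' p p'. k\<in>L \<Longrightarrow> k'\<in>L \<Longrightarrow> f k p = f k' p' \<Longrightarrow> k = k'"
  shows "prob_space.indep_vars (iid_copies mu) (\<lambda>_. iid_copies mu) (\<lambda>k \<omega>. \<omega> \<circ> f k) L"
proof -
  interpret P: prob_space "iid_copies mu"
    unfolding iid_copies_def using assms by (intro prob_space_PiM) auto
  have df: "disjoint_family_on (\<lambda>k. range (f k)) L"
    unfolding disjoint_family_on_def using disj by blast
  have 1: "P.indep_vars (\<lambda>k. PiM (range (f k)) (\<lambda>_. mu)) (\<lambda>k \<omega>. restrict (\<lambda>i. \<omega> i) (range (f k))) L"
    by (rule P.indep_vars_restrict[OF coord_indep[OF assms(1)] _ df]) auto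
  have 2: "P.indep_vars (\<lambda>_. iid_copies mu) (\<lambda>k \<omega>. (\<lambda>x. \<lambda>p. x (f k p)) (restrict (\<lambda>i. \<omega> i) (range (f k)))) L"
  proof (rule P.indep_vars_compose2[OF 1])
    fix k assume "k \<in> L"
    show "(\<lambda>x. \<lambda>p. x (f k p)) \<in> measurable (PiM (range (f k)) (\<lambda>_. mu)) (iid_copies mu)"
      unfolding iid_copies_def
      apply (rule measurable_PiM_single')
       apply (rule measurable_component_singleton)
       apply simp
      apply (auto simp: space_PiM)
      done
  qed
  have 3: "(\<lambda>k \<omega>. (\<lambda>x. \<lambda>p. x (f k p)) (restrict (\<lambda>i. \<omega> i) (range (f k)))) = (\<lambda>k \<omega>. \<omega> \<circ> f k)"
    by (auto simp: fun_eq_iff)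
  show ?thesis using 2 unfolding 3 .
qed

theorem lemma2p1:
  fixes mu :: "real measure" and \<sigma> :: "nat \<Rightarrow> nat" and \<gamma> :: nat
  assumes "prob_space mu" and "sets mu = sets borel"
    and "AE x in mu. x \<ge> 0"
    and "mono \<sigma>" and "\<And>n. \<sigma> n \<ge> 1"
    and "\<gamma> \<ge> 1"
  shows "summable_wrt mu \<sigma> \<longleftrightarrow> summable_wrt mu (\<lambda>n. \<sigma> (\<gamma> * n))"
proof -
  define P where "P = iid_copies mu"
  interpret P: prob_space P
    unfolding P_def iid_copies_def using assms(1) by (intro prob_space_PiM) auto
  define \<tau> where "\<tau> = (\<lambda>n. \<sigma> (\<gamma> * n))"
  define E where "E = (\<lambda>s. {\<omega> \<in> space P. (\<Sum>n. ennreal (Lambda s \<omega> n)) < \<infinity>})"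
  have Esets: "E s \<in> sets P" for s unfolding E_def P_def by (rule E_meas[OF assms(2)])
  have sw: "summable_wrt mu s \<longleftrightarrow> measure P (E s) > 0" for s
    unfolding summable_wrt_def E_def P_def ..
  define f where "f = (\<lambda>k (m::nat, j::nat). (\<gamma>*m+k, j))"
  have finj: "inj (f k)" for k
    unfolding f_def using assms(6) by (auto intro!: injI)
  have Tsp: "\<omega> \<circ> f k \<in> space P" if "\<omega> \<in> space P" for \<omega> k
    using measurable_space[OF T_meas[where mu=mu and f="f k"]] that unfolding P_def by blast
  have Tprob: "measure P ((\<lambda>\<omega>. \<omega> \<circ> f k) -` E s \<inter> space P) = measure P (E s)" for k s
    unfolding P_def by (rule T_prob[OF assms(1) finj]) (use Esets P_def in auto)
  have a: "Lambda \<tau> (\<omega> \<circ> f 0) m = Lambda \<sigma> \<omega> (\<gamma>*m)" for \<omega> m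
    unfolding Lambda_def \<tau>_def f_def by simp
  have b: "Lambda \<sigma> \<omega> (\<gamma>*m+k) \<le> Lambda \<tau> (\<omega> \<circ> f k) m" for \<omega> m k
  proof -
    have "\<sigma> (\<gamma>*m) \<le> \<sigma> (\<gamma>*m+k)" using assms(4) by (simp add: monoD)
    moreover have "\<sigma> (\<gamma>*m) \<ge> 1" by (rule assms(5))
    ultimately show ?thesis
      unfolding Lambda_def \<tau>_def f_def
      by (intro Min_antimono) auto
  qed
  show ?thesis
    unfolding \<tau>_def[symmetric] sw
  proof
    assume pos: "measure P (E \<sigma>) > 0"
    have "E \<sigma> \<subseteq> (\<lambda>\<omega>. \<omega> \<circ> f 0) -` E \<tau> \<inter> space P"
    proof
      fix \<omega> assume w: "\<omega> \<in> E \<sigma>"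
      have "(\<Sum>m. ennreal (Lambda \<tau> (\<omega> \<circ> f 0) m)) = (\<Sum>m. ennreal (Lambda \<sigma> \<omega> (\<gamma>*m)))"
        by (simp add: a)
      also have "\<dots> \<le> (\<Sum>n. ennreal (Lambda \<sigma> \<omega> n))"
        by (rule sub_le[OF assms(6)])
      also have "\<dots> < \<infinity>" using w unfolding E_def by auto
      finally show "\<omega> \<in> (\<lambda>\<omega>. \<omega> \<circ> f 0) -` E \<tau> \<inter> space P"
        using w Tsp unfolding E_def by auto
    qed
    then have "measure P (E \<sigma>) \<le> measure P ((\<lambda>\<omega>. \<omega> \<circ> f 0) -` E \<tau> \<inter> space P)"
    proof (rule P.finite_measure_mono)
      show "(\<lambda>\<omega>. \<omega> \<circ> f 0) -` E \<tau> \<inter> space P \<in> P.events"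
        using measurable_sets[OF T_meas[where mu=mu and f="f 0"], of "E \<tau>"] Esets[of \<tau>]
        unfolding P_def by simp
    qed
    also have "\<dots> = measure P (E \<tau>)" by (rule Tprob)
    finally show "measure P (E \<tau>) > 0" using pos by simp
  next
    assume pos: "measure P (E \<tau>) > 0"
    define B where "B = (\<Inter>k\<in>{..<\<gamma>}. (\<lambda>\<omega>. \<omega> \<circ> f k) -` E \<tau> \<inter> space P)"
    have ind: "P.indep_vars (\<lambda>_. P) (\<lambda>k \<omega>. \<omega> \<circ> f k) {..<\<gamma>}"
      unfolding P_def
    proof (rule block_indep[OF assms(1)])
      fix k k' p p' assume "k \<in> {..<\<gamma>}" "k' \<in> {..<\<gamma>}" "f k p = f k' p'"
      then have "k < \<gamma>" "k' < \<gamma>" "\<gamma>*fst p + k = \<gamma>*fst p' + k'"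
        unfolding f_def by (auto simp: case_prod_beta)
      then have "(\<gamma>*fst p + k) mod \<gamma> = (\<gamma>*fst p' + k') mod \<gamma>" by simp
      with \<open>k < \<gamma>\<close> \<open>k' < \<gamma>\<close> show "k = k'" by simp
    qed
    have "measure P B = (\<Prod>k\<in>{..<\<gamma>}. measure P ((\<lambda>\<omega>. \<omega> \<circ> f k) -` E \<tau> \<inter> space P))"
      unfolding B_def
      by (rule P.indep_varsD[OF ind]) (use assms(6) Esets in \<open>auto simp: lessThan_empty_iff\<close>)
    also have "\<dots> = measure P (E \<tau>) ^ \<gamma>" by (simp add: Tprob)
    finally have Bpos: "measure P B > 0" using pos by simp
    have "B \<subseteq> E \<sigma>"
    proof
      fix \<omega> assume w: "\<omega> \<in> B"
      then have sp: "\<omega> \<in> space P" using assms(6) unfolding B_def by (auto simp: lessThan_empty_iff)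
      have fin: "(\<Sum>m. ennreal (Lambda \<tau> (\<omega> \<circ> f k) m)) < \<infinity>" if "k < \<gamma>" for k
        using w that unfolding B_def E_def by (auto split: if_splits)
      have "(\<Sum>n. ennreal (Lambda \<sigma> \<omega> n)) \<le> (\<Sum>k<\<gamma>. \<Sum>m. ennreal (Lambda \<sigma> \<omega> (\<gamma>*m+k)))"
        by (rule group_le[OF assms(6)])
      also have "\<dots> \<le> (\<Sum>k<\<gamma>. \<Sum>m. ennreal (Lambda \<tau> (\<omega> \<circ> f k) m))"
        by (intro sum_mono suminf_le summableI ennreal_leI b)
      also have "\<dots> < \<infinity>"
        using fin by (simp add: less_top[symmetric])
      finally show "\<omega> \<in> E \<sigma>" using sp unfolding E_def by auto
    qed
    then have "measure P B \<le> measure P (E \<sigma>)"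
      by (intro P.finite_measure_mono Esets)
    then show "measure P (E \<sigma>) > 0" using Bpos by simp
  qed
qed

end
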